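(* Let $G\le\mathrm{O}(d)$ be finite, $z_1,\ldots,z_n\in\mathbb{R}^d$, $x\in\bigcap_{i=1}^nQ_{z_i}$, and $y\in\mathbb{R}^d$. Then: (a) for every $i\in\{1,\ldots,n\}$, the set $\arg\max_{p\in[z_i]}\langle p,x\rangle$ consists of a single element, denoted $v_i(x)$; (b) the set $\mathcal{F}(x,y)$ of functions $f:\{1,\ldots,n\}\to[y]$ satisfying $f(i)\in S(x,y)\cap\arg\max_{q\in[y]}\langle q,v_i(x)\rangle$ for all $i$ is nonempty.
   Context: For $x\in\mathbb{R}^d$, $[x]:=\{gx:g\in G\}$. The open Voronoi cell $V_x$ is the set of $y\in\mathbb{R}^d$ such that $x$ is the unique maximizer of $\langle p,y\rangle$ over $p\in[x]$; $Q_x:=\bigcup_{p\in[x]}V_p$. For $x,y\in\mathbb{R}^d$, $S(x,y):=\{q\in[y]:V_q\cap V_x\ne\varnothing\}$. *)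

theory Defs
  imports "HOL-Analysis.Analysis"
begin

definition finite_orth_group :: "(real^'d^'d) set \<Rightarrow> bool" where
  "finite_orth_group G \<longleftrightarrow> finite G \<and> (\<forall>g\<in>G. orthogonal_matrix g) \<and> mat 1 \<in> G
     \<and> (\<forall>g\<in>G. \<forall>h\<in>G. g ** h \<in> G) \<and> (\<forall>g\<in>G. matrix_inv g \<in> G)"

definition orbit :: "(real^'d^'d) set \<Rightarrow> real^'d \<Rightarrow> (real^'d) set" where
  "orbit G x = {g *v x | g. g \<in> G}"

definition voronoi :: "(real^'d^'d) set \<Rightarrow> real^'d \<Rightarrow> (real^'d) set" where
  "voronoi G x = {y. (\<forall>p\<in>orbit G x. p \<noteq> x \<longrightarrow> inner p y < inner x y)}"

definition Qcell :: "(real^'d^'d) set \<Rightarrow> real^'d \<Rightarrow> (real^'d) set" where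
  "Qcell G x = (\<Union>p\<in>orbit G x. voronoi G p)"

definition Sset :: "(real^'d^'d) set \<Rightarrow> real^'d \<Rightarrow> real^'d \<Rightarrow> (real^'d) set" where
  "Sset G x y = {q \<in> orbit G y. voronoi G q \<inter> voronoi G x \<noteq> {}}"

definition argmax_inner :: "(real^'d) set \<Rightarrow> real^'d \<Rightarrow> (real^'d) set" where
  "argmax_inner A w = {p \<in> A. \<forall>p'\<in>A. inner p' w \<le> inner p w}"

end

theory Submission
  imports Defs
begin

lemma inner_mv_transpose:
  fixes g :: "real^'d^'d"
  shows "inner (g *v a) b = inner a (transpose g *v b)"
  by (metis dot_lmul_matrix inner_commute transpose_matrix_vector)

lemma orth_inner:
  fixes g :: "real^'d^'d"
  assumes "orthogonal_matrix g"
  shows "inner (g *v a) (g *v b) = inner a b"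
  using assms
  by (simp add: inner_mv_transpose matrix_vector_mul_assoc orthogonal_matrix_def)

lemma orth_inv:
  fixes g :: "real^'d^'d"
  assumes "orthogonal_matrix g"
  shows "matrix_inv g = transpose g"
proof -
  have ex: "g ** transpose g = mat 1 \<and> transpose g ** g = mat 1"
    using assms by (simp add: orthogonal_matrix_def)
  let ?M = "matrix_inv g"
  have "g ** ?M = mat 1 \<and> ?M ** g = mat 1"
    unfolding matrix_inv_def by (rule someI[of _ "transpose g"], rule ex)
  then have "?M = ?M ** (g ** transpose g)" using ex by simp
  also have "\<dots> = (?M ** g) ** transpose g" by (simp add: matrix_mul_assoc)
  also have "\<dots> = transpose g" using \<open>g ** ?M = mat 1 \<and> ?M ** g = mat 1\<close> by simp
  finally show ?thesis .
qed

lemma orbit_self: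
  assumes "finite_orth_group G"
  shows "z \<in> orbit G z"
  using assms unfolding finite_orth_group_def orbit_def
  by (metis (mono_tags, lifting) matrix_vector_mul_lid mem_Collect_eq)

lemma orbit_trans:
  assumes "finite_orth_group G" "p \<in> orbit G z"
  shows "orbit G p = orbit G z"
proof -
  obtain g where g: "g \<in> G" "p = g *v z" using assms(2) unfolding orbit_def by auto
  have og: "orthogonal_matrix g" using assms(1) g unfolding finite_orth_group_def by auto
  have tg: "transpose g \<in> G" using assms(1) g orth_inv[OF og] unfolding finite_orth_group_def by auto
  have zp: "z = transpose g *v p" using og g
    by (simp add: matrix_vector_mul_assoc orthogonal_matrix_def)
  show ?thesis
  proof
    show "orbit G p \<subseteq> orbit G z"
      using assms(1) g unfolding orbit_def finite_orth_group_def
      by (auto simp: matrix_vector_mul_assoc)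
    show "orbit G z \<subseteq> orbit G p"
    proof
      fix w assume "w \<in> orbit G z"
      then obtain h where h: "h \<in> G" "w = h *v z" unfolding orbit_def by auto
      have "w = (h ** transpose g) *v p" using h zp by (metis matrix_vector_mul_assoc)
      moreover have "h ** transpose g \<in> G" using assms(1) h tg unfolding finite_orth_group_def by auto
      ultimately show "w \<in> orbit G p" unfolding orbit_def by blast
    qed
  qed
qed

lemma orbit_norm:
  assumes "finite_orth_group G" "p \<in> orbit G z"
  shows "inner p p = inner z z"
  using assms unfolding orbit_def finite_orth_group_def
  by (auto simp: orth_inner)

lemma finite_orbit:
  assumes "finite_orth_group G"
  shows "finite (orbit G z)"
proof -
  have "orbit G z = (\<lambda>g. g *v z) ` G" unfolding orbit_def by auto
  then show ?thesis using assms unfolding finite_orth_group_def by simp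
qed

lemma cs_strict:
  fixes p q :: "real^'d"
  assumes "inner p p = inner q q" "p \<noteq> q"
  shows "inner p q < inner q q"
proof -
  have "0 < inner (p - q) (p - q)" using assms(2) by simp
  also have "inner (p - q) (p - q) = inner p p - 2 * inner p q + inner q q"
    by (simp add: inner_diff inner_commute)
  finally show ?thesis using assms(1) by simp
qed

lemma argmax_single:
  assumes "finite_orth_group G" "p \<in> orbit G z" "x \<in> voronoi G p"
  shows "argmax_inner (orbit G z) x = {p}"
proof -
  have O: "orbit G p = orbit G z" using orbit_trans assms by blast
  have lt: "\<And>p'. p' \<in> orbit G z \<Longrightarrow> p' \<noteq> p \<Longrightarrow> inner p' x < inner p x"
    using assms(3) O unfolding voronoi_def by auto
  show ?thesis
  proof (rule set_eqI, rule iffI)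
    fix q assume "q \<in> argmax_inner (orbit G z) x"
    then have "q \<in> orbit G z" "inner p x \<le> inner q x" using assms(2) unfolding argmax_inner_def by auto
    then show "q \<in> {p}" using lt by force
  next
    fix q assume "q \<in> {p}"
    then show "q \<in> argmax_inner (orbit G z) x" unfolding argmax_inner_def using assms(2) lt
      by (auto intro: less_imp_le)
  qed
qed

lemma poly_ev:
  fixes a b c :: real
  assumes "a < 0 \<or> (a = 0 \<and> b < 0) \<or> (a = 0 \<and> b = 0 \<and> c < 0)"
  shows "eventually (\<lambda>t. a + t * b + t^2 * c < 0) (at_right 0)"
proof -
  have pos: "eventually (\<lambda>t::real. t > 0) (at_right 0)"
    by (simp add: eventually_at_right_less)
  consider "a < 0" | "a = 0" "b < 0" | "a = 0" "b = 0" "c < 0" using assms by blast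
  then show ?thesis
  proof cases
    case 1
    have "((\<lambda>t::real. a + t * b + t^2 * c) \<longlongrightarrow> a + 0 * b + 0^2 * c) (at_right 0)"
      by (intro tendsto_intros)
    then show ?thesis using 1 by (simp add: order_tendstoD(2))
  next
    case 2
    have "((\<lambda>t::real. b + t * c) \<longlongrightarrow> b + 0 * c) (at_right 0)"
      by (intro tendsto_intros)
    then have "eventually (\<lambda>t. b + t * c < 0) (at_right 0)" using 2 by (simp add: order_tendstoD(2))
    then show ?thesis using pos
    proof eventually_elim
      case (elim t)
      have "a + t * b + t^2 * c = t * (b + t * c)" using 2 by (simp add: algebra_simps power2_eq_square)
      then show ?case using elim by (simp add: mult_pos_neg)
    qed
  next
    case 3
    show ?thesis using pos
      by eventually_elim (use 3 in \<open>simp add: mult_pos_neg\<close>)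
  qed
qed

lemma exists_argmax:
  fixes A :: "(real^'d) set"
  assumes "finite A" "A \<noteq> {}"
  shows "\<exists>q\<in>A. \<forall>p\<in>A. inner p w \<le> inner q w"
proof -
  let ?m = "Max ((\<lambda>p. inner p w) ` A)"
  have "?m \<in> (\<lambda>p. inner p w) ` A" using assms by simp
  then obtain q where "q \<in> A" "inner q w = ?m" by auto
  moreover have "\<forall>p\<in>A. inner p w \<le> ?m" using assms by simp
  ultimately show ?thesis by metis
qed

lemma ev_ex:
  assumes "eventually P (at_right (0::real))"
  shows "\<exists>t. P t"
  using assms eventually_happens trivial_limit_at_right_real by blast

lemma keyb:
  assumes G: "finite_orth_group G" and xv: "x \<in> voronoi G v"
  shows "\<exists>q. q \<in> Sset G x y \<and> q \<in> argmax_inner (orbit G y) v"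
proof -
  let ?O = "orbit G y"
  have fO: "finite ?O" using finite_orbit[OF G] .
  have yO: "y \<in> ?O" using orbit_self[OF G] .
  obtain q1 where q1: "q1 \<in> ?O" "\<forall>p\<in>?O. inner p v \<le> inner q1 v"
    using exists_argmax[OF fO, of v] yO by blast
  let ?M = "argmax_inner ?O v"
  have MO: "?M \<subseteq> ?O" unfolding argmax_inner_def by auto
  have fM: "finite ?M" using fO MO finite_subset by blast
  have q1M: "q1 \<in> ?M" using q1 unfolding argmax_inner_def by auto
  obtain q0 where q0M: "q0 \<in> ?M" and q0x: "\<forall>p\<in>?M. inner p x \<le> inner q0 x"
    using exists_argmax[OF fM, of x] q1M by blast
  have q0O: "q0 \<in> ?O" using q0M MO by auto
  define u where "u t = v + t *\<^sub>R x + t^2 *\<^sub>R q0" for t :: real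
  have expand: "inner q (u t) - inner r (u t) = (inner q v - inner r v) + t * (inner q x - inner r x)
      + t^2 * (inner q q0 - inner r q0)" for q r t
    by (simp add: u_def inner_add_right algebra_simps)
  have E1: "eventually (\<lambda>t. \<forall>q\<in>?O. q \<noteq> q0 \<longrightarrow> inner q (u t) - inner q0 (u t) < 0) (at_right 0)"
  proof (rule eventually_ball_finite[OF fO], rule ballI)
    fix q assume qO: "q \<in> ?O"
    show "eventually (\<lambda>t. q \<noteq> q0 \<longrightarrow> inner q (u t) - inner q0 (u t) < 0) (at_right 0)"
    proof (cases "q = q0")
      case True then show ?thesis by simp
    next
      case False
      have a: "inner q v - inner q0 v \<le> 0" using q0M qO unfolding argmax_inner_def by auto
      have b: "inner q v - inner q0 v = 0 \<Longrightarrow> inner q x - inner q0 x \<le> 0"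
      proof -
        assume "inner q v - inner q0 v = 0"
        then have "q \<in> ?M" using q0M qO unfolding argmax_inner_def by auto
        then show ?thesis using q0x by auto
      qed
      have c: "inner q q0 - inner q0 q0 < 0"
        using cs_strict[of q q0] orbit_norm[OF G qO] orbit_norm[OF G q0O] False by simp
      have "eventually (\<lambda>t. (inner q v - inner q0 v) + t * (inner q x - inner q0 x)
          + t^2 * (inner q q0 - inner q0 q0) < 0) (at_right 0)"
        by (rule poly_ev) (use a b c in linarith)
      then show ?thesis by eventually_elim (simp add: expand)
    qed
  qed
  have fX: "finite (orbit G x)" using finite_orbit[OF G] .
  have E2: "eventually (\<lambda>t. \<forall>p\<in>orbit G x. p \<noteq> x \<longrightarrow> inner p (u t) - inner x (u t) < 0) (at_right 0)"
  proof (rule eventually_ball_finite[OF fX], rule ballI)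
    fix p assume pX: "p \<in> orbit G x"
    show "eventually (\<lambda>t. p \<noteq> x \<longrightarrow> inner p (u t) - inner x (u t) < 0) (at_right 0)"
    proof (cases "p = x")
      case True then show ?thesis by simp
    next
      case False
      obtain g where g: "g \<in> G" "p = g *v x" using pX unfolding orbit_def by auto
      have og: "orthogonal_matrix g" using G g unfolding finite_orth_group_def by auto
      have tg: "transpose g \<in> G" using G g orth_inv[OF og] unfolding finite_orth_group_def by auto
      have wO: "transpose g *v v \<in> orbit G v" using tg unfolding orbit_def by blast
      have "inner (transpose g *v v) x \<le> inner v x"
        using xv wO unfolding voronoi_def by (cases "transpose g *v v = v") auto
      have a: "inner p v - inner x v \<le> 0"
      proof -
        have "inner p v = inner (transpose g *v v) x"
          using g inner_mv_transpose[of g x v] inner_commute by metis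
        then show ?thesis using \<open>inner (transpose g *v v) x \<le> inner v x\<close> inner_commute[of v x] by linarith
      qed
      have b: "inner p x - inner x x < 0"
        using cs_strict[of p x] orbit_norm[OF G pX] False by simp
      have "eventually (\<lambda>t. (inner p v - inner x v) + t * (inner p x - inner x x)
          + t^2 * (inner p q0 - inner x q0) < 0) (at_right 0)"
        by (rule poly_ev) (use a b in linarith)
      then show ?thesis by eventually_elim (simp add: expand)
    qed
  qed
  obtain t where t1: "\<forall>q\<in>?O. q \<noteq> q0 \<longrightarrow> inner q (u t) - inner q0 (u t) < 0"
    and t2: "\<forall>p\<in>orbit G x. p \<noteq> x \<longrightarrow> inner p (u t) - inner x (u t) < 0"
    using ev_ex[OF eventually_conj[OF E1 E2]] by blast
  have "u t \<in> voronoi G q0"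
    using t1 orbit_trans[OF G q0O] unfolding voronoi_def by auto
  moreover have "u t \<in> voronoi G x"
    using t2 unfolding voronoi_def by auto
  ultimately have "q0 \<in> Sset G x y" using q0O unfolding Sset_def by blast
  then show ?thesis using q0M by blast
qed

theorem corollary19:
  fixes G :: "(real^'d^'d) set" and z :: "nat \<Rightarrow> real^'d" and n :: nat
    and x y :: "real^'d"
  assumes "finite_orth_group G"
    and "x \<in> (\<Inter>i\<in>{1..n}. Qcell G (z i))"
  shows "(\<forall>i\<in>{1..n}. \<exists>!p. p \<in> argmax_inner (orbit G (z i)) x)
     \<and> (\<exists>f \<in> {1..n} \<rightarrow>\<^sub>E orbit G y. \<forall>i\<in>{1..n}.
          f i \<in> Sset G x y \<inter>
                argmax_inner (orbit G y) (THE p. p \<in> argmax_inner (orbit G (z i)) x))"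
proof -
  have P: "\<forall>i\<in>{1..n}. \<exists>p. p \<in> orbit G (z i) \<and> x \<in> voronoi G p"
    using assms(2) unfolding Qcell_def by blast
  then obtain v where v: "\<forall>i\<in>{1..n}. v i \<in> orbit G (z i) \<and> x \<in> voronoi G (v i)"
    by metis
  have A: "argmax_inner (orbit G (z i)) x = {v i}" if "i \<in> {1..n}" for i
    using argmax_single[OF assms(1)] v that by blast
  have part1: "\<forall>i\<in>{1..n}. \<exists>!p. p \<in> argmax_inner (orbit G (z i)) x"
    using A by auto
  have "\<forall>i\<in>{1..n}. \<exists>q. q \<in> Sset G x y \<and> q \<in> argmax_inner (orbit G y) (v i)"
    using keyb[OF assms(1)] v by blast
  then obtain f where f: "\<forall>i\<in>{1..n}. f i \<in> Sset G x y \<and> f i \<in> argmax_inner (orbit G y) (v i)"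
    by metis
  have "restrict f {1..n} \<in> {1..n} \<rightarrow>\<^sub>E orbit G y"
    using f unfolding Sset_def by auto
  moreover have "\<forall>i\<in>{1..n}. restrict f {1..n} i \<in> Sset G x y \<inter>
                argmax_inner (orbit G y) (THE p. p \<in> argmax_inner (orbit G (z i)) x)"
    using f A by auto
  ultimately show ?thesis using part1 by blast
qed

end
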